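(* Let $p$ be an odd prime and $r\geq 2$ an integer with $p\nmid r$. Let $S$ be the smallest set of positive integers such that (a) $r\in S$; (b) $n\in S$ whenever $n^{p-1}\in S$; (c) $(n+p)^{p-1}\in S$ whenever $n\in S$. Then $S=\{n\geq 2: n\not\equiv 0\pmod p\}$.
   Context: "Smallest" means contained in every set of positive integers satisfying (a), (b), (c). *)

theory Defs
  imports "HOL-Computational_Algebra.Primes"
begin

inductive_set genS :: "nat \<Rightarrow> nat \<Rightarrow> nat set" for p r :: nat where
  base: "0 < r \<Longrightarrow> r \<in> genS p r"
| root: "0 < n \<Longrightarrow> n ^ (p - 1) \<in> genS p r \<Longrightarrow> n \<in> genS p r"
| pow: "n \<in> genS p r \<Longrightarrow> (n + p) ^ (p - 1) \<in> genS p r"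

end

theory Submission
  imports Defs "HOL-Number_Theory.Number_Theory"
begin

lemma genS_sub:
  fixes p r :: nat
  assumes "prime p" and "odd p" and "2 \<le> r" and "\<not> p dvd r"
  shows "n \<in> genS p r \<Longrightarrow> 2 \<le> n \<and> \<not> p dvd n"
proof (induction rule: genS.induct)
  case base
  then show ?case using assms by auto
next
  case (root n)
  have "n \<noteq> 1" using root by auto
  moreover have "\<not> p dvd n" using root prime_dvd_power_nat_iff[OF assms(1), of "p - 1" n] prime_gt_1_nat[OF assms(1)]
    by simp
  ultimately show ?case using root by auto
next
  case (pow n)
  have p3: "p \<ge> 3" using assms(2) prime_ge_2_nat[OF assms(1)]
    by (cases "p = 2") auto
  have "n + p \<ge> 2" using pow by auto
  hence "(n + p) ^ (p - 1) \<ge> (n+p)^1"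
    by (intro power_increasing) (use p3 in auto)
  moreover have "\<not> p dvd (n+p)" using pow by auto
  hence "\<not> p dvd (n+p)^(p-1)" using assms(1) prime_dvd_power_nat by blast
  ultimately show ?case using \<open>n + p \<ge> 2\<close> by auto
qed

lemma genS_addp:
  assumes "n \<in> genS p r" "p > 0"
  shows "n + k * p \<in> genS p r"
proof (induction k)
  case 0
  then show ?case using assms by simp
next
  case (Suc k)
  have pw: "(n + k*p + p) ^ (p - 1) \<in> genS p r" using genS.pow[OF Suc] .
  have pos: "0 < n + k*p + p" using assms(2) by simp
  have "n + k*p + p \<in> genS p r" by (rule genS.root[OF pos pw])
  moreover have "n + Suc k * p = n + k*p + p" by simp
  ultimately show ?case by (simp only:)
qed

lemma genS_down:
  assumes "m > 0" "m ^ (q ^ j) \<in> genS p r" "q = p - 1"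
  shows "m \<in> genS p r"
  using assms(2)
proof (induction j)
  case 0
  then show ?case by simp
next
  case (Suc j)
  have "m ^ (q ^ Suc j) = m ^ (q ^ j * q)" by (simp only: power_Suc2)
  also have "... = (m ^ (q ^ j)) ^ q" by (rule power_mult)
  finally have "m ^ (q ^ Suc j) = (m ^ (q ^ j)) ^ q" .
  hence "(m ^ (q ^ j)) ^ (p - 1) \<in> genS p r" using Suc.prems assms(3) by simp
  hence "m ^ (q ^ j) \<in> genS p r" using genS.root assms(1) by simp
  thus ?case using Suc.IH by blast
qed

theorem lemma18:
  fixes p r :: nat
  assumes "prime p" and "odd p" and "2 \<le> r" and "\<not> p dvd r"
  shows "genS p r = {n. 2 \<le> n \<and> \<not> p dvd n}"
proof
  show "genS p r \<subseteq> {n. 2 \<le> n \<and> \<not> p dvd n}"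
    using genS_sub[OF assms] by blast
next
  show "{n. 2 \<le> n \<and> \<not> p dvd n} \<subseteq> genS p r"
  proof
    fix m assume "m \<in> {n. 2 \<le> n \<and> \<not> p dvd n}"
    hence m2: "2 \<le> m" and mp: "\<not> p dvd m" by auto
    define q where "q = p - 1"
    have p3: "p \<ge> 3" using assms(2) prime_ge_2_nat[OF assms(1)]
      by (cases "p = 2") auto
    have q2: "q \<ge> 2" using p3 q_def by auto
    have rS: "r \<in> genS p r" using assms(3) genS.base by simp
    define a where "a = (r + p) ^ q"
    have aS: "a \<in> genS p r" using genS.pow[OF rS] a_def q_def by simp
    have "\<not> p dvd (r + p)" using assms(4) by auto
    hence acong: "[a = 1] (mod p)" unfolding a_def q_def
      using fermat_theorem[OF assms(1)] by blast
    have mcong: "[m ^ q = 1] (mod p)" unfolding q_def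
      using fermat_theorem[OF assms(1) mp] .
    define x where "x = m ^ (q ^ a)"
    have "a \<ge> 2" using genS_sub[OF assms aS] by simp
    hence "a = Suc (a - 1)" by simp
    hence qa: "q ^ a = (q ^ (a - 1)) * q" by (metis power_Suc2)
    have "x = m ^ (q ^ (a - 1) * q)" unfolding x_def by (simp only: qa)
    also have "... = m ^ (q * q ^ (a - 1))" by (simp only: mult.commute)
    also have "... = (m ^ q) ^ (q ^ (a - 1))" by (rule power_mult)
    finally have xq: "x = (m ^ q) ^ (q ^ (a - 1))" .
    have xcong: "[x = 1] (mod p)"
    proof -
      have "[(m ^ q) ^ (q ^ (a - 1)) = 1 ^ (q ^ (a - 1))] (mod p)"
        by (rule cong_pow[OF mcong])
      thus ?thesis using xq by simp
    qed
    have "a < 2 ^ a" by (rule less_exp)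
    also have "... \<le> q ^ a" by (rule power_mono[OF q2]) simp
    also have "... < 2 ^ (q ^ a)" by (rule less_exp)
    also have "... \<le> x" unfolding x_def by (rule power_mono[OF m2]) simp
    finally have ax: "a \<le> x" by (rule less_imp_le)
    have "[x = a] (mod p)" using xcong acong by (metis cong_sym cong_trans)
    then obtain k where "x = k * p + a" using cong_le_nat[OF ax] by blast
    have p0: "p > 0" using p3 by simp
    have "a + k * p \<in> genS p r" using genS_addp[OF aS p0] .
    moreover have "x = a + k * p" using \<open>x = k * p + a\<close> by simp
    ultimately have "x \<in> genS p r" by simp
    hence xS: "m ^ (q ^ a) \<in> genS p r" unfolding x_def .
    have m0: "m > 0" using m2 by simp
    show "m \<in> genS p r" using genS_down[OF m0 xS q_def] .
  qed
qed

end
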